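(* Let $u$ be a half-activated vertex of a graph $G$. Then there exists a half-activated vertex of $G$ adjacent to $u$.
   Context: For a finite simple graph $G$ with vertex set $\{v_1,\dots,v_n\}$, the closed adjacency matrix $N(G)$ is the $n\times n$ matrix over $\mathbb{Z}_2$ whose $(i,j)$ entry is $1$ iff $i=j$ or $v_i$ is adjacent to $v_j$. Elements of $\operatorname{Ker}(N(G))$ are null patterns. A vertex $v$ is half-activated if $\boldsymbol{\ell}(v)=1$ for some null pattern $\boldsymbol{\ell}$. *)

theory Defs
  imports Main "HOL-Library.Z2"
begin

definition simple_graph :: "'a set \<Rightarrow> ('a \<Rightarrow> 'a \<Rightarrow> bool) \<Rightarrow> bool" where
  "simple_graph V E \<longleftrightarrow> finite V \<and> (\<forall>x y. E x y \<longrightarrow> x \<in> V \<and> y \<in> V)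
     \<and> (\<forall>x y. E x y \<longrightarrow> E y x) \<and> (\<forall>x. \<not> E x x)"

definition closed_adj :: "('a \<Rightarrow> 'a \<Rightarrow> bool) \<Rightarrow> 'a \<Rightarrow> 'a \<Rightarrow> bit" where
  "closed_adj E v w = (if v = w \<or> E v w then 1 else 0)"

definition null_pattern :: "'a set \<Rightarrow> ('a \<Rightarrow> 'a \<Rightarrow> bool) \<Rightarrow> ('a \<Rightarrow> bit) \<Rightarrow> bool" where
  "null_pattern V E l \<longleftrightarrow> (\<forall>x. x \<notin> V \<longrightarrow> l x = 0)
     \<and> (\<forall>v\<in>V. (\<Sum>w\<in>V. closed_adj E v w * l w) = 0)"

definition half_activated :: "'a set \<Rightarrow> ('a \<Rightarrow> 'a \<Rightarrow> bool) \<Rightarrow> 'a \<Rightarrow> bool" where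
  "half_activated V E v \<longleftrightarrow> v \<in> V \<and> (\<exists>l. null_pattern V E l \<and> l v = 1)"

end

theory Submission
  imports Defs
begin

theorem lemma4p1:
  fixes V :: "'a set" and E :: "'a \<Rightarrow> 'a \<Rightarrow> bool" and u :: 'a
  assumes "simple_graph V E"
    and "half_activated V E u"
  shows "\<exists>w. E u w \<and> half_activated V E w"
proof (rule ccontr)
  assume neg: "\<not> (\<exists>w. E u w \<and> half_activated V E w)"
  from assms(2) obtain l where uV: "u \<in> V" and nl: "null_pattern V E l" and lu: "l u = 1"
    unfolding half_activated_def by blast
  have fin: "finite V" using assms(1) unfolding simple_graph_def by blast
  have EV: "\<And>w. E u w \<Longrightarrow> w \<in> V" using assms(1) unfolding simple_graph_def by blast
  have z: "\<And>w. E u w \<Longrightarrow> l w = 0"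
  proof -
    fix w assume "E u w"
    hence "\<not> l w = 1" using neg nl EV unfolding half_activated_def by blast
    thus "l w = 0" by (cases "l w") auto
  qed
  have row: "(\<Sum>w\<in>V. closed_adj E u w * l w) = 0" using nl uV unfolding null_pattern_def by blast
  have "(\<Sum>w\<in>V. closed_adj E u w * l w) = closed_adj E u u * l u + (\<Sum>w\<in>V-{u}. closed_adj E u w * l w)"
    using fin uV by (rule sum.remove)
  also have "(\<Sum>w\<in>V-{u}. closed_adj E u w * l w) = 0"
    by (rule sum.neutral) (auto simp: closed_adj_def z)
  finally have "(\<Sum>w\<in>V. closed_adj E u w * l w) = 1" using lu by (simp add: closed_adj_def)
  with row show False by simp
qed

end
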